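(* Let $\mathbf w$ be a colored involution, and for integers $i,j$ let $a_i$ be the number of biletters $\binom{i}{i}$, $b_i$ the number of biletters $\binom{i}{\bar i}$, and, for $i\ne j$, $c_{ij}$ the number of biletters $\binom{i}{j}$ and $d_{ij}$ the number of biletters $\binom{i}{\bar j}$ in $\mathbf w$ (so $c_{ij}=c_{ji}$, $d_{ij}=d_{ji}$). Then the bottom row of $\mathbf w^{st}$ is an involution in $B_n$ with $a$ fixed points, $b$ barred fixed points, $c$ two-cycles and $d$ barred two-cycles, where \[ a=\sum_i a_i,\quad b=\sum_i\Big(b_i-2\Big\lfloor\frac{b_i}{2}\Big\rfloor\Big),\quad c=\sum_{i<j}c_{ij},\quad d=\sum_{i<j}d_{ij}+\sum_i\Big\lfloor\frac{b_i}{2}\Big\rfloor. \]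
   Context: Letters are positive integers, possibly barred; for a letter $y$, $y^{neg}$ is $y$ if unbarred and $-m$ if $y=\bar m$; $|y|$ is the underlying integer. A biletter is a pair $\binom{x}{y}$ of letters. A doubly colored biword is a finite sequence of biletters in canonical order: $\binom{x}{y}$ precedes $\binom{k}{l}$ iff $|x|<|k|$, or $|x|=|k|$ with $x$ barred and $k$ unbarred, or $x=k$ both unbarred and $y^{neg}<l^{neg}$, or $x=k$ both barred and $l^{neg}<y^{neg}$. A colored biword is a doubly colored biword whose top letters are all unbarred; $n$ denotes its length. Operations: $\mathbf w^{\overline{st}}$ replaces the top letters, read left to right, by $1,2,\dots$ keeping their bars; $\mathbf w^{inv}$ swaps the two letters of each biletter (bars travel with letters) and reorders canonically; for a colored biword, $\mathbf w^{inv_r}$ replaces each biletter $\binom{x}{y}$ by $\binom{|y|}{x'}$ where $x'$ is $x$ barred iff $y$ is barred, and reorders canonically. $\mathbf w$ is a colored involution if $\mathbf w^{inv_r}=\mathbf w$. The standardisation is $\mathbf w^{st}=(((\mathbf w^{\overline{st}})^{inv})^{\overline{st}})^{inv}$; it has top row $1,\dots,n$ and bottom row a word $\pi$ in letters $\{1,\dots,n,\bar1,\dots,\bar n\}$ using each $k\in[n]$ exactly once (an element of $B_n$). Such $\pi$ is an involution if for each $k$: $\pi_k=k$ (fixed point), $\pi_k=\bar k$ (barred fixed point), or for some $l\ne k$, $\pi_k=l,\pi_l=k$ (two-cycle) or $\pi_k=\bar l,\pi_l=\bar k$ (barred two-cycle). *)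

theory Defs
  imports Main "HOL-Library.Multiset" "HOL-Library.Product_Lexorder"
begin

(* Letters: U m is the unbarred letter m, B m is the barred letter \<bar>m.
   Letters are required to be positive (|y| \<ge> 1) by the well-formedness predicates below. *)
datatype letter = U nat | B nat

fun absl :: "letter \<Rightarrow> nat" where
  "absl (U m) = m" | "absl (B m) = m"

fun barred :: "letter \<Rightarrow> bool" where
  "barred (U m) = False" | "barred (B m) = True"

fun negl :: "letter \<Rightarrow> int" where
  "negl (U m) = int m" | "negl (B m) = - int m"

type_synonym biletter = "letter \<times> letter"   (* (top, bottom) *)

definition prec :: "biletter \<Rightarrow> biletter \<Rightarrow> bool" where
  "prec p q \<longleftrightarrow> (let (x, y) = p; (k, l) = q in
      absl x < absl k
    \<or> (absl x = absl k \<and> barred x \<and> \<not> barred k)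
    \<or> (x = k \<and> \<not> barred x \<and> \<not> barred k \<and> negl y < negl l)
    \<or> (x = k \<and> barred x \<and> barred k \<and> negl l < negl y))"

definition canonical :: "biletter list \<Rightarrow> bool" where
  "canonical w \<longleftrightarrow> sorted_wrt (\<lambda>p q. \<not> prec q p) w"

(* sort key realising the canonical order lexicographically: prec p q \<longleftrightarrow> bkey p < bkey q *)
definition bkey :: "biletter \<Rightarrow> int \<times> int \<times> int" where
  "bkey p = (let (x, y) = p in
     (int (absl x), (if barred x then 0 else 1), (if barred x then - negl y else negl y)))"

definition canon :: "biletter list \<Rightarrow> biletter list" where
  "canon w = sort_key bkey w"

definition pos_letters :: "biletter list \<Rightarrow> bool" where
  "pos_letters w \<longleftrightarrow> (\<forall>(x, y) \<in> set w. absl x \<ge> 1 \<and> absl y \<ge> 1)"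

definition doubly_colored_biword :: "biletter list \<Rightarrow> bool" where
  "doubly_colored_biword w \<longleftrightarrow> canonical w \<and> pos_letters w"

definition colored_biword :: "biletter list \<Rightarrow> bool" where
  "colored_biword w \<longleftrightarrow> doubly_colored_biword w \<and> (\<forall>(x, y) \<in> set w. \<not> barred x)"

definition st_bar :: "biletter list \<Rightarrow> biletter list" where
  "st_bar w = map (\<lambda>i. let (x, y) = w ! i in
                         ((if barred x then B (Suc i) else U (Suc i)), y)) [0..<length w]"

definition inv_bw :: "biletter list \<Rightarrow> biletter list" where
  "inv_bw w = canon (map (\<lambda>(x, y). (y, x)) w)"

definition inv_r :: "biletter list \<Rightarrow> biletter list" where
  "inv_r w = canon (map (\<lambda>(x, y). (U (absl y), (if barred y then B (absl x) else U (absl x)))) w)"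

definition colored_involution :: "biletter list \<Rightarrow> bool" where
  "colored_involution w \<longleftrightarrow> colored_biword w \<and> inv_r w = w"

definition st :: "biletter list \<Rightarrow> biletter list" where
  "st w = inv_bw (st_bar (inv_bw (st_bar w)))"

(* the bottom row of a biword, as a 1-indexed word *)
definition bottom :: "biletter list \<Rightarrow> nat \<Rightarrow> letter" where
  "bottom w k = snd (w ! (k - 1))"

definition in_Bn :: "nat \<Rightarrow> (nat \<Rightarrow> letter) \<Rightarrow> bool" where
  "in_Bn n \<pi> \<longleftrightarrow> bij_betw (\<lambda>k. absl (\<pi> k)) {1..n} {1..n}"

definition is_involution :: "nat \<Rightarrow> (nat \<Rightarrow> letter) \<Rightarrow> bool" where
  "is_involution n \<pi> \<longleftrightarrow> (\<forall>k \<in> {1..n}. \<pi> k = U k \<or> \<pi> k = B k \<or>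
      (\<exists>l \<in> {1..n}. l \<noteq> k \<and> ((\<pi> k = U l \<and> \<pi> l = U k) \<or> (\<pi> k = B l \<and> \<pi> l = B k))))"

definition fixed_points :: "nat \<Rightarrow> (nat \<Rightarrow> letter) \<Rightarrow> nat" where
  "fixed_points n \<pi> = card {k \<in> {1..n}. \<pi> k = U k}"

definition barred_fixed_points :: "nat \<Rightarrow> (nat \<Rightarrow> letter) \<Rightarrow> nat" where
  "barred_fixed_points n \<pi> = card {k \<in> {1..n}. \<pi> k = B k}"

definition two_cycles :: "nat \<Rightarrow> (nat \<Rightarrow> letter) \<Rightarrow> nat" where
  "two_cycles n \<pi> = card {(k, l). k \<in> {1..n} \<and> l \<in> {1..n} \<and> k < l \<and> \<pi> k = U l \<and> \<pi> l = U k}"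

definition barred_two_cycles :: "nat \<Rightarrow> (nat \<Rightarrow> letter) \<Rightarrow> nat" where
  "barred_two_cycles n \<pi> = card {(k, l). k \<in> {1..n} \<and> l \<in> {1..n} \<and> k < l \<and> \<pi> k = B l \<and> \<pi> l = B k}"

(* the integers occurring (as underlying values of letters) in w; all counts vanish outside *)
definition vals :: "biletter list \<Rightarrow> nat set" where
  "vals w = absl ` fst ` set w \<union> absl ` snd ` set w"

definition acnt :: "biletter list \<Rightarrow> nat \<Rightarrow> nat" where
  "acnt w i = count (mset w) (U i, U i)"
definition bcnt :: "biletter list \<Rightarrow> nat \<Rightarrow> nat" where
  "bcnt w i = count (mset w) (U i, B i)"
definition ccnt :: "biletter list \<Rightarrow> nat \<Rightarrow> nat \<Rightarrow> nat" where
  "ccnt w i j = count (mset w) (U i, U j)"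
definition dcnt :: "biletter list \<Rightarrow> nat \<Rightarrow> nat \<Rightarrow> nat" where
  "dcnt w i j = count (mset w) (U i, B j)"

end

theory Submission imports Defs begin

lemma prec_bkey: "prec p q \<longleftrightarrow> bkey p < bkey q"
  apply (cases p; cases q)
  subgoal for x y k l
    by (cases x; cases k; cases y; cases l) (auto simp: prec_def bkey_def)
  done

definition phi :: "biletter \<Rightarrow> biletter" where
  "phi p = (case p of (x, y) \<Rightarrow> (U (absl y), (if barred y then B (absl x) else U (absl x))))"

definition good :: "biletter \<Rightarrow> bool" where
  "good p \<longleftrightarrow> \<not> barred (fst p) \<and> absl (fst p) \<ge> 1 \<and> absl (snd p) \<ge> 1"

lemma good_cases:
  assumes "good p"
  obtains a b where "p = (U a, U b)" "a \<ge> 1" "b \<ge> 1" | a b where "p = (U a, B b)" "a \<ge> 1" "b \<ge> 1"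
  using assms unfolding good_def
  by (cases p; rename_tac x y; case_tac x; case_tac y) auto

lemma bkey_UU[simp]: "bkey (U a, U b) = (int a, 1, int b)" by (simp add: bkey_def)
lemma bkey_UB[simp]: "bkey (U a, B b) = (int a, 1, - int b)" by (simp add: bkey_def)
lemma bkey_BU[simp]: "bkey (B a, U b) = (int a, 0, - int b)" by (simp add: bkey_def)
lemma bkey_BB[simp]: "bkey (B a, B b) = (int a, 0, int b)" by (simp add: bkey_def)
lemma phi_UU[simp]: "phi (U a, U b) = (U b, U a)" by (simp add: phi_def)
lemma phi_UB[simp]: "phi (U a, B b) = (U b, B a)" by (simp add: phi_def)

lemma good_phi: "good p \<Longrightarrow> good (phi p)"
  by (erule good_cases) (auto simp: good_def)
lemma phi_phi: "good p \<Longrightarrow> phi (phi p) = p"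
  by (erule good_cases) auto
lemma bkey_inj: "good p \<Longrightarrow> good q \<Longrightarrow> bkey p = bkey q \<Longrightarrow> p = q"
  by (erule good_cases; erule good_cases) auto
lemma phi_inj: "good p \<Longrightarrow> good q \<Longrightarrow> phi p = phi q \<Longrightarrow> p = q"
  by (metis phi_phi)

lemma length_filter_mset: "mset xs = mset ys \<Longrightarrow> length (filter P xs) = length (filter P ys)"
  by (metis mset_filter size_mset)

locale cinv =
  fixes w :: "biletter list"
  assumes ci: "colored_involution w"
begin

abbreviation "n \<equiv> length w"

lemma good_w: "p \<in> set w \<Longrightarrow> good p"
  using ci unfolding colored_involution_def colored_biword_def doubly_colored_biword_def
    pos_letters_def good_def by auto

lemma good_nth: "k < n \<Longrightarrow> good (w ! k)"
  using good_w by simp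

lemma mset_phi: "mset (map phi w) = mset w"
proof -
  have "inv_r w = w" using ci colored_involution_def by blast
  moreover have "map (\<lambda>(x, y). (U (absl y), (if barred y then B (absl x) else U (absl x)))) w = map phi w"
    by (simp add: phi_def case_prod_beta)
  ultimately show ?thesis unfolding inv_r_def canon_def by (metis mset_sort)
qed

lemma sorted_le: "k' \<le> k \<Longrightarrow> k < n \<Longrightarrow> bkey (w ! k') \<le> bkey (w ! k)"
proof (cases "k' = k")
  case False
  assume a: "k' \<le> k" "k < n"
  have "sorted_wrt (\<lambda>p q. \<not> prec q p) w"
    using ci unfolding colored_involution_def colored_biword_def doubly_colored_biword_def canonical_def
    by blast
  then have "\<not> prec (w ! k) (w ! k')" using a False by (simp add: sorted_wrt_iff_nth_less)
  then show ?thesis by (simp add: prec_bkey)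
qed simp

definition cnt :: "biletter \<Rightarrow> nat" where "cnt q = count (mset w) q"
definition S :: "biletter \<Rightarrow> nat" where "S q = length (filter (\<lambda>p. bkey p < bkey q) w)"
definition occ :: "nat \<Rightarrow> nat" where "occ k = card {k'. k' < k \<and> w ! k' = w ! k}"

lemma cnt_card: "cnt q = card {k. k < n \<and> w ! k = q}"
  unfolding cnt_def count_mset count_list_eq_length_filter length_filter_conv_card
  by (metis)

lemma cnt_phi: "good p \<Longrightarrow> cnt (phi p) = cnt p"
proof -
  assume g: "good p"
  have "cnt (phi p) = count (mset (map phi w)) (phi p)" by (simp only: cnt_def mset_phi)
  also have "\<dots> = length (filter (\<lambda>q. phi p = q) (map phi w))" by (simp only: count_mset count_list_eq_length_filter)
  also have "\<dots> = length (filter (\<lambda>q. phi p = phi q) w)" by (simp add: o_def)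
  also have "\<dots> = length (filter (\<lambda>q. p = q) w)"
  proof (rule arg_cong[where f=length], rule filter_cong)
    fix x assume "x \<in> set w"
    then show "(phi p = phi x) = (p = x)" using phi_inj[OF g good_w[OF \<open>x \<in> set w\<close>]] by auto
  qed simp
  finally show ?thesis by (simp add: cnt_def count_mset count_list_eq_length_filter)
qed

lemma pos: "k < n \<Longrightarrow> k = S (w ! k) + occ k"
proof -
  assume k: "k < n"
  have S: "S (w ! k) = card {k'. k' < n \<and> bkey (w ! k') < bkey (w ! k)}"
    unfolding S_def by (simp add: length_filter_conv_card)
  have "{..<k} = {k'. k' < n \<and> bkey (w ! k') < bkey (w ! k)} \<union> {k'. k' < k \<and> w ! k' = w ! k}"
  proof (intro equalityI subsetI)
    fix k' assume "k' \<in> {..<k}"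
    then have "k' < k" by simp
    then have "bkey (w ! k') \<le> bkey (w ! k)" using sorted_le k by simp
    then have "bkey (w ! k') < bkey (w ! k) \<or> w ! k' = w ! k"
      using bkey_inj[of "w!k'" "w!k"] good_nth[of k] good_nth[of k'] k \<open>k' < k\<close> unfolding le_less by auto
    then show "k' \<in> {k'. k' < n \<and> bkey (w ! k') < bkey (w ! k)} \<union> {k'. k' < k \<and> w ! k' = w ! k}"
      using \<open>k' < k\<close> k by auto
  next
    fix k' assume "k' \<in> {k'. k' < n \<and> bkey (w ! k') < bkey (w ! k)} \<union> {k'. k' < k \<and> w ! k' = w ! k}"
    then show "k' \<in> {..<k}"
      using sorted_le[of k k'] by (auto simp: not_less[symmetric])
  qed
  moreover have "{k'. k' < n \<and> bkey (w ! k') < bkey (w ! k)} \<inter> {k'. k' < k \<and> w ! k' = w ! k} = {}"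
    by auto
  ultimately have "card {..<k} = S (w ! k) + occ k"
    unfolding S occ_def by (simp add: card_Un_disjoint)
  then show ?thesis by simp
qed

lemma occ_lt: "k < n \<Longrightarrow> occ k < cnt (w ! k)"
  unfolding occ_def cnt_card
  by (rule psubset_card_mono) auto

lemma occ_inj: "inj_on occ {k. k < n \<and> w ! k = q}"
proof -
  have "occ k1 < occ k2" if "k1 < k2" "k2 < n" "w ! k1 = q" "w ! k2 = q" for k1 k2
    unfolding occ_def using that by (intro psubset_card_mono) auto
  then show ?thesis
    by (intro inj_onI) (metis (mono_tags, lifting) linorder_neqE_nat mem_Collect_eq order.irrefl)
qed

lemma occ_bij: "bij_betw occ {k. k < n \<and> w ! k = q} {..<cnt q}"
proof -
  have "occ ` {k. k < n \<and> w ! k = q} \<subseteq> {..<cnt q}" using occ_lt by auto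
  moreover have "card (occ ` {k. k < n \<and> w ! k = q}) = card {..<cnt q}"
    using occ_inj by (simp add: card_image cnt_card)
  ultimately have "occ ` {k. k < n \<and> w ! k = q} = {..<cnt q}"
    by (simp add: card_subset_eq)
  then show ?thesis using occ_inj by (simp add: bij_betw_def)
qed

lemma exists_pos: "r < cnt q \<Longrightarrow> \<exists>k. k < n \<and> w ! k = q \<and> occ k = r"
  using occ_bij[of q] unfolding bij_betw_def by force

definition e :: "nat \<Rightarrow> biletter" where "e k = (snd (w ! k), U (Suc k))"
definition tau :: "nat \<Rightarrow> nat" where "tau k = card {k'. k' < n \<and> bkey (e k') < bkey (e k)}"
definition r :: "nat \<Rightarrow> nat" where
  "r k = (if barred (snd (w ! k)) then cnt (w ! k) - 1 - occ k else occ k)"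

lemma crux:
  assumes k: "k < n" and k': "k' < n"
  shows "bkey (e k') < bkey (e k) \<longleftrightarrow> bkey (phi (w ! k')) < bkey (phi (w ! k))
     \<or> (w ! k' = w ! k \<and> (if barred (snd (w ! k)) then k < k' else k' < k))"
proof -
  have s1: "k' < k \<Longrightarrow> bkey (w ! k') \<le> bkey (w ! k)" using sorted_le k by simp
  have s2: "k < k' \<Longrightarrow> bkey (w ! k) \<le> bkey (w ! k')" using sorted_le k' by simp
  have "k' < k \<or> k' = k \<or> k < k'" by arith
  then show ?thesis
    using good_nth[OF k] good_nth[OF k'] s1 s2
    by (elim good_cases) (auto simp: e_def)
qed

lemma card_A1: "card {k'. k' < n \<and> bkey (phi (w ! k')) < bkey q} = S q"
proof -
  have "S q = length (filter (\<lambda>p. bkey p < bkey q) (map phi w))"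
    unfolding S_def by (rule length_filter_mset) (simp only: mset_phi)
  also have "\<dots> = length (filter (\<lambda>p. bkey (phi p) < bkey q) w)" by (simp add: o_def)
  finally show ?thesis by (simp add: length_filter_conv_card)
qed

lemma card_A2: assumes k: "k < n"
  shows "card {k'. k' < n \<and> w ! k' = w ! k \<and> (if barred (snd (w ! k)) then k < k' else k' < k)} = r k"
proof (cases "barred (snd (w ! k))")
  case False
  then have "{k'. k' < n \<and> w ! k' = w ! k \<and> (if barred (snd (w ! k)) then k < k' else k' < k)}
     = {k'. k' < k \<and> w ! k' = w ! k}" using k by auto
  then show ?thesis using False by (simp add: r_def occ_def)
next
  case True
  let ?A = "{k'. k' < n \<and> w ! k' = w ! k \<and> (if barred (snd (w ! k)) then k < k' else k' < k)}"
  have eq: "{k'. k' < n \<and> w ! k' = w ! k} = {k'. k' < k \<and> w ! k' = w ! k} \<union> ({k} \<union> ?A)"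
    using True k by auto
  have "cnt (w ! k) = card ({k'. k' < k \<and> w ! k' = w ! k} \<union> ({k} \<union> ?A))"
    unfolding cnt_card eq ..
  also have "\<dots> = occ k + (1 + card ?A)"
    unfolding occ_def using True by (subst card_Un_disjoint; auto)+
  finally show ?thesis using True by (simp add: r_def)
qed

lemma tau_eq: assumes k: "k < n" shows "tau k = S (phi (w ! k)) + r k"
proof -
  let ?A1 = "{k'. k' < n \<and> bkey (phi (w ! k')) < bkey (phi (w ! k))}"
  let ?A2 = "{k'. k' < n \<and> w ! k' = w ! k \<and> (if barred (snd (w ! k)) then k < k' else k' < k)}"
  have "{k'. k' < n \<and> bkey (e k') < bkey (e k)} = ?A1 \<union> ?A2"
    using crux[OF k] by blast
  moreover have "?A1 \<inter> ?A2 = {}" by auto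
  ultimately have "tau k = card ?A1 + card ?A2"
    unfolding tau_def by (simp add: card_Un_disjoint)
  then show ?thesis using card_A1 card_A2[OF k] by simp
qed

lemma r_lt: "k < n \<Longrightarrow> r k < cnt (w ! k)"
  using occ_lt[of k] by (auto simp: r_def)

lemma tau_props: assumes k: "k < n"
  shows "tau k < n \<and> w ! tau k = phi (w ! k) \<and> occ (tau k) = r k"
proof -
  have "r k < cnt (phi (w ! k))" using r_lt[OF k] cnt_phi[OF good_nth[OF k]] by simp
  then obtain m where m: "m < n" "w ! m = phi (w ! k)" "occ m = r k" using exists_pos by blast
  have "m = tau k" using pos[OF m(1)] m tau_eq[OF k] by simp
  then show ?thesis using m by simp
qed

lemma barred_phi: "good p \<Longrightarrow> barred (snd (phi p)) = barred (snd p)"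
  by (erule good_cases) auto

lemma tau_tau: assumes k: "k < n" shows "tau (tau k) = k"
proof -
  have t: "tau k < n" "w ! tau k = phi (w ! k)" "occ (tau k) = r k" using tau_props[OF k] by auto
  have g: "good (w ! k)" using good_nth[OF k] .
  have "r (tau k) = occ k"
    using t occ_lt[OF k] barred_phi[OF g] cnt_phi[OF g] by (auto simp: r_def)
  then show ?thesis using tau_eq[OF t(1)] t phi_phi[OF g] pos[OF k] by simp
qed

lemma tau_bij: "bij_betw tau {..<n} {..<n}"
  by (rule bij_betw_byWitness[where f'=tau]) (auto simp: tau_tau tau_props)

lemma stbar_w: "map (\<lambda>(x, y). (y, x)) (st_bar w) = map e [0..<n]"
proof -
  have "fst (w ! k) = U (absl (fst (w ! k)))" if "k < n" for k
    using good_nth[OF that] by (elim good_cases) auto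
  then show ?thesis
    unfolding st_bar_def e_def
    by (auto simp: case_prod_beta Let_def good_def dest!: good_nth)
qed

lemma bkey_e_inj: "inj_on (bkey \<circ> e) {0..<n}"
proof (rule inj_onI)
  fix k k' assume "k \<in> {0..<n}" "k' \<in> {0..<n}" "(bkey \<circ> e) k = (bkey \<circ> e) k'"
  then show "k = k'"
    unfolding e_def o_def
    by (cases "snd (w ! k)"; cases "snd (w ! k')") auto
qed

end

lemma rank_sorted:
  assumes "sorted (map f ys)" "distinct (map f ys)" "m < length ys"
  shows "card {i. i < length ys \<and> f (ys ! i) < f (ys ! m)} = (m::nat)"
proof -
  have ss: "sorted_wrt (<) (map f ys)" using assms(1,2) by (simp add: strict_sorted_iff)
  have "{i. i < length ys \<and> f (ys ! i) < f (ys ! m)} = {..<m}"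
  proof (intro equalityI subsetI)
    fix i assume "i \<in> {i. i < length ys \<and> f (ys ! i) < f (ys ! m)}"
    then show "i \<in> {..<m}"
      using sorted_wrt_nth_less[OF ss, of m i] assms(3)
      by (cases "m < i") (auto simp: not_less le_less)
  next
    fix i assume "i \<in> {..<m}"
    then show "i \<in> {i. i < length ys \<and> f (ys ! i) < f (ys ! m)}"
      using sorted_wrt_nth_less[OF ss, of i m] assms(3) by auto
  qed
  then show ?thesis by simp
qed


context cinv begin

definition Bl :: "biletter list" where "Bl = sort_key bkey (map e [0..<n])"

lemma inv1: "inv_bw (st_bar w) = Bl"
  unfolding inv_bw_def canon_def Bl_def stbar_w ..

lemma Bl_len: "length Bl = n" by (simp add: Bl_def)

lemma Bl_tau: assumes k: "k < n" shows "Bl ! tau k = e k"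
proof -
  have mB: "mset Bl = mset (map e [0..<n])" by (simp add: Bl_def)
  have "e k \<in> set Bl" using k by (simp add: Bl_def)
  then obtain j where j: "j < n" "Bl ! j = e k" by (auto simp: in_set_conv_nth Bl_len)
  have sB: "sorted (map bkey Bl)" by (simp add: Bl_def)
  have "distinct (map bkey (map e [0..<n]))"
    using bkey_e_inj by (simp add: distinct_map)
  then have dB: "distinct (map bkey Bl)"
    using mB by (metis mset_map mset_eq_imp_distinct_iff)
  have "j = card {i. i < length Bl \<and> bkey (Bl ! i) < bkey (Bl ! j)}"
    using rank_sorted[OF sB dB, of j] j by (simp add: Bl_len)
  also have "\<dots> = length (filter (\<lambda>x. bkey x < bkey (e k)) Bl)"
    by (simp add: length_filter_conv_card j)
  also have "\<dots> = length (filter (\<lambda>x. bkey x < bkey (e k)) (map e [0..<n]))"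
    by (rule length_filter_mset[OF mB])
  also have "\<dots> = tau k"
  proof -
    have "{i. i < n \<and> bkey (map e [0..<n] ! i) < bkey (e k)} = {k'. k' < n \<and> bkey (e k') < bkey (e k)}"
      by auto
    then show ?thesis unfolding tau_def by (simp add: length_filter_conv_card)
  qed
  finally show ?thesis using j by simp
qed

definition g :: "nat \<Rightarrow> biletter" where
  "g j = (snd (Bl ! j), (if barred (fst (Bl ! j)) then B (Suc j) else U (Suc j)))"

definition h :: "nat \<Rightarrow> biletter" where
  "h k = (U (Suc k), (if barred (snd (w ! k)) then B (Suc (tau k)) else U (Suc (tau k))))"

lemma stbar_Bl: "map (\<lambda>(x, y). (y, x)) (st_bar Bl) = map g [0..<n]"
  unfolding st_bar_def g_def Bl_len by (auto simp: case_prod_beta Let_def)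

lemma h_g: "k < n \<Longrightarrow> h k = g (tau k)"
  using Bl_tau[of k] by (simp add: h_def g_def e_def)

lemma bkey_h: "bkey (h k) = (int (Suc k), 1, (if barred (snd (w ! k)) then - int (Suc (tau k)) else int (Suc (tau k))))"
  by (simp add: h_def)

lemma st_eq: "st w = map h [0..<n]"
proof -
  have "st w = sort_key bkey (map g [0..<n])"
    unfolding st_def inv1 unfolding inv_bw_def canon_def stbar_Bl ..
  also have "\<dots> = map h [0..<n]"
  proof (rule sort_key_inj_key_eq)
    have hm: "map h [0..<n] = map g (map tau [0..<n])" by (simp add: h_g)
    have "mset (map h [0..<n]) = image_mset g (image_mset tau (mset_set {0..<n}))"
      unfolding hm mset_map mset_upt ..
    also have "image_mset tau (mset_set {0..<n}) = mset_set {0..<n}"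
      using tau_bij by (simp add: image_mset_mset_set bij_betw_def atLeast0LessThan)
    finally show ms: "mset (map g [0..<n]) = mset (map h [0..<n])" by simp
    have "inj_on bkey (set (map h [0..<n]))"
    proof (rule inj_onI)
      fix p q assume "p \<in> set (map h [0..<n])" "q \<in> set (map h [0..<n])" "bkey p = bkey q"
      then obtain x x' where xx: "p = h x" "q = h x'" "bkey (h x) = bkey (h x')" by auto
      then have "x = x'" by (simp only: bkey_h) simp
      then show "p = q" using xx by simp
    qed
    then show "inj_on bkey (set (map g [0..<n]))"
      using mset_eq_setD[OF ms] by simp
    show "sorted (map bkey (map h [0..<n]))"
      by (auto simp: sorted_iff_nth_mono_less bkey_h)
  qed
  finally show ?thesis .
qed

lemma bottom_st: "k < n \<Longrightarrow> bottom (st w) (Suc k) = (if barred (snd (w ! k)) then B (Suc (tau k)) else U (Suc (tau k)))"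
  by (simp add: bottom_def st_eq h_def)

end


context cinv begin

lemma S_card: "S q = card {i. i < n \<and> bkey (w ! i) < bkey q}"
  unfolding S_def by (simp add: length_filter_conv_card)

lemma S_mono: assumes "bkey p < bkey q" shows "S p + cnt p \<le> S q"
proof -
  have "S p + cnt p = card ({i. i < n \<and> bkey (w ! i) < bkey p} \<union> {i. i < n \<and> w ! i = p})"
    unfolding S_card cnt_card by (subst card_Un_disjoint) auto
  also have "\<dots> \<le> S q"
    unfolding S_card using assms by (intro card_mono) auto
  finally show ?thesis .
qed

lemma cls_UU: assumes k: "k < n" and wk: "w ! k = (U a, U b)"
  shows "(tau k = k \<longleftrightarrow> a = b) \<and> (k < tau k \<longleftrightarrow> a < b)"
proof -
  have t: "tau k = S (U b, U a) + occ k" using tau_eq[OF k] wk by (simp add: r_def)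
  have p: "k = S (U a, U b) + occ k" using pos[OF k] wk by simp
  have o: "occ k < cnt (U a, U b)" using occ_lt[OF k] wk by simp
  have c: "cnt (U b, U a) = cnt (U a, U b)" using cnt_phi[OF good_nth[OF k]] wk by simp
  show ?thesis
  proof (cases a b rule: linorder_cases)
    case less
    then have "S (U a, U b) + cnt (U a, U b) \<le> S (U b, U a)" by (intro S_mono) simp
    then show ?thesis using less t p o by simp
  next
    case equal
    then show ?thesis using t p by simp
  next
    case greater
    then have "S (U b, U a) + cnt (U b, U a) \<le> S (U a, U b)" by (intro S_mono) simp
    then show ?thesis using greater t p o c by simp
  qed
qed

lemma cls_UB: assumes k: "k < n" and wk: "w ! k = (U a, B b)"
  shows "(tau k = k \<longleftrightarrow> a = b \<and> 2 * occ k + 1 = cnt (w ! k))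
       \<and> (k < tau k \<longleftrightarrow> a < b \<or> (a = b \<and> occ k < cnt (w ! k) div 2))"
proof -
  have t: "tau k = S (U b, B a) + (cnt (U a, B b) - 1 - occ k)" using tau_eq[OF k] wk by (simp add: r_def)
  have p: "k = S (U a, B b) + occ k" using pos[OF k] wk by simp
  have o: "occ k < cnt (U a, B b)" using occ_lt[OF k] wk by simp
  have c: "cnt (U b, B a) = cnt (U a, B b)" using cnt_phi[OF good_nth[OF k]] wk by simp
  show ?thesis
  proof (cases a b rule: linorder_cases)
    case less
    then have "S (U a, B b) + cnt (U a, B b) \<le> S (U b, B a)" by (intro S_mono) simp
    then show ?thesis using less t p o wk by (simp; arith)
  next
    case equal
    then show ?thesis using t p o wk by auto
  next
    case greater
    then have "S (U b, B a) + cnt (U b, B a) \<le> S (U a, B b)" by (intro S_mono) simp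
    then show ?thesis using greater t p o c wk by (simp; arith)
  qed
qed

end


context cinv begin

lemma card_occ: "card {k. k < n \<and> w ! k = q \<and> Q (occ k)} = card {t. t < cnt q \<and> Q t}"
proof -
  have inj: "inj_on occ {k. k < n \<and> w ! k = q \<and> Q (occ k)}"
    by (rule inj_on_subset[OF occ_inj[of q]]) auto
  have "occ ` {k. k < n \<and> w ! k = q \<and> Q (occ k)} = {t. t < cnt q \<and> Q t}"
  proof (intro equalityI subsetI)
    fix t assume "t \<in> occ ` {k. k < n \<and> w ! k = q \<and> Q (occ k)}"
    then show "t \<in> {t. t < cnt q \<and> Q t}" using occ_lt by auto
  next
    fix t assume "t \<in> {t. t < cnt q \<and> Q t}"
    then obtain k where "k < n" "w ! k = q" "occ k = t" using exists_pos[of t q] by auto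
    then show "t \<in> occ ` {k. k < n \<and> w ! k = q \<and> Q (occ k)}"
      using \<open>t \<in> {t. t < cnt q \<and> Q t}\<close> by (auto intro!: image_eqI[where x=k])
  qed
  then show ?thesis using card_image[OF inj] by simp
qed

lemma card_family:
  assumes "finite V" "inj_on f V"
  shows "card {k. k < n \<and> (\<exists>i\<in>V. w ! k = f i \<and> Q i k)}
       = (\<Sum>i\<in>V. card {k. k < n \<and> w ! k = f i \<and> Q i k})"
proof -
  have "{k. k < n \<and> (\<exists>i\<in>V. w ! k = f i \<and> Q i k)} = (\<Union>i\<in>V. {k. k < n \<and> w ! k = f i \<and> Q i k})"
    by auto
  moreover have "card (\<Union>i\<in>V. {k. k < n \<and> w ! k = f i \<and> Q i k})
       = (\<Sum>i\<in>V. card {k. k < n \<and> w ! k = f i \<and> Q i k})"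
    using assms by (intro card_UN_disjoint) (auto dest: inj_onD)
  ultimately show ?thesis by simp
qed

lemma finite_vals: "finite (vals w)" by (simp add: vals_def)

lemma vals_mem: "k < n \<Longrightarrow> absl (fst (w ! k)) \<in> vals w \<and> absl (snd (w ! k)) \<in> vals w"
  unfolding vals_def using nth_mem by blast

abbreviation "P2 \<equiv> {(i, j). i \<in> vals w \<and> j \<in> vals w \<and> i < j}"

lemma finite_P2: "finite P2"
  by (rule finite_subset[of _ "vals w \<times> vals w"]) (auto simp: finite_vals)

lemma point: assumes k: "k < n"
  shows "(\<not> barred (snd (w ! k)) \<and> tau k = k \<longleftrightarrow> (\<exists>i\<in>vals w. w ! k = (U i, U i) \<and> True))
   \<and> (barred (snd (w ! k)) \<and> tau k = k \<longleftrightarrow> (\<exists>i\<in>vals w. w ! k = (U i, B i) \<and> 2 * occ k + 1 = cnt (U i, B i)))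
   \<and> (\<not> barred (snd (w ! k)) \<and> k < tau k \<longleftrightarrow> (\<exists>x\<in>P2. w ! k = (\<lambda>(i, j). (U i, U j)) x \<and> True))
   \<and> (barred (snd (w ! k)) \<and> k < tau k \<longleftrightarrow> (\<exists>x\<in>P2. w ! k = (\<lambda>(i, j). (U i, B j)) x \<and> True)
        \<or> (\<exists>i\<in>vals w. w ! k = (U i, B i) \<and> occ k < cnt (U i, B i) div 2))"
  using good_nth[OF k] vals_mem[OF k]
proof (elim good_cases)
  fix a b assume wk: "w ! k = (U a, U b)" and vm: "absl (fst (w ! k)) \<in> vals w \<and> absl (snd (w ! k)) \<in> vals w"
  show ?thesis using cls_UU[OF k wk] wk vm by auto
next
  fix a b assume wk: "w ! k = (U a, B b)" and vm: "absl (fst (w ! k)) \<in> vals w \<and> absl (snd (w ! k)) \<in> vals w"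
  show ?thesis using cls_UB[OF k wk] wk vm by auto
qed

lemma card_odd: "card {t. t < (c::nat) \<and> 2 * t + 1 = c} = c - 2 * (c div 2)"
proof (cases "even c")
  case True
  then have "{t. t < c \<and> 2 * t + 1 = c} = {}" by auto
  then show ?thesis using True by simp
next
  case False
  then have "{t. t < c \<and> 2 * t + 1 = c} = {c div 2}" by auto presburger+
  then show ?thesis using False by simp presburger
qed

lemma card_half: "card {t. t < (c::nat) \<and> t < c div 2} = c div 2"
proof -
  have "{t. t < c \<and> t < c div 2} = {..<c div 2}" by auto
  then show ?thesis by simp
qed

lemma beta_tau: "k < n \<Longrightarrow> barred (snd (w ! tau k)) = barred (snd (w ! k))"
  using tau_props[of k] barred_phi[OF good_nth] by simp

lemma fp_set: "{j \<in> {1..n}. bottom (st w) j = U j} = Suc ` {k. k < n \<and> \<not> barred (snd (w ! k)) \<and> tau k = k}"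
proof (intro equalityI subsetI)
  fix j assume "j \<in> {j \<in> {1..n}. bottom (st w) j = U j}"
  then obtain k where "j = Suc k" "k < n" "bottom (st w) (Suc k) = U (Suc k)"
    by (cases j) auto
  then show "j \<in> Suc ` {k. k < n \<and> \<not> barred (snd (w ! k)) \<and> tau k = k}"
    using bottom_st[of k] by (auto split: if_splits)
qed (auto simp: bottom_st)

lemma bfp_set: "{j \<in> {1..n}. bottom (st w) j = B j} = Suc ` {k. k < n \<and> barred (snd (w ! k)) \<and> tau k = k}"
proof (intro equalityI subsetI)
  fix j assume "j \<in> {j \<in> {1..n}. bottom (st w) j = B j}"
  then obtain k where "j = Suc k" "k < n" "bottom (st w) (Suc k) = B (Suc k)"
    by (cases j) auto
  then show "j \<in> Suc ` {k. k < n \<and> barred (snd (w ! k)) \<and> tau k = k}"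
    using bottom_st[of k] by (auto split: if_splits)
qed (auto simp: bottom_st)

lemma tc_set: "{(j, l). j \<in> {1..n} \<and> l \<in> {1..n} \<and> j < l \<and> bottom (st w) j = U l \<and> bottom (st w) l = U j}
  = (\<lambda>k. (Suc k, Suc (tau k))) ` {k. k < n \<and> \<not> barred (snd (w ! k)) \<and> k < tau k}"
proof (intro equalityI subsetI)
  fix x assume "x \<in> {(j, l). j \<in> {1..n} \<and> l \<in> {1..n} \<and> j < l \<and> bottom (st w) j = U l \<and> bottom (st w) l = U j}"
  then obtain k l where "x = (Suc k, l)" "k < n" "bottom (st w) (Suc k) = U l" "Suc k < l"
    by (cases x; rename_tac j l; case_tac j) auto
  then show "x \<in> (\<lambda>k. (Suc k, Suc (tau k))) ` {k. k < n \<and> \<not> barred (snd (w ! k)) \<and> k < tau k}"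
    using bottom_st[of k] by (auto split: if_splits)
next
  fix x assume "x \<in> (\<lambda>k. (Suc k, Suc (tau k))) ` {k. k < n \<and> \<not> barred (snd (w ! k)) \<and> k < tau k}"
  then obtain k where "x = (Suc k, Suc (tau k))" "k < n" "\<not> barred (snd (w ! k))" "k < tau k" by auto
  then show "x \<in> {(j, l). j \<in> {1..n} \<and> l \<in> {1..n} \<and> j < l \<and> bottom (st w) j = U l \<and> bottom (st w) l = U j}"
    using bottom_st[of k] bottom_st[of "tau k"] tau_props[of k] tau_tau[of k] beta_tau[of k] by auto
qed

lemma btc_set: "{(j, l). j \<in> {1..n} \<and> l \<in> {1..n} \<and> j < l \<and> bottom (st w) j = B l \<and> bottom (st w) l = B j}
  = (\<lambda>k. (Suc k, Suc (tau k))) ` {k. k < n \<and> barred (snd (w ! k)) \<and> k < tau k}"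
proof (intro equalityI subsetI)
  fix x assume "x \<in> {(j, l). j \<in> {1..n} \<and> l \<in> {1..n} \<and> j < l \<and> bottom (st w) j = B l \<and> bottom (st w) l = B j}"
  then obtain k l where "x = (Suc k, l)" "k < n" "bottom (st w) (Suc k) = B l" "Suc k < l"
    by (cases x; rename_tac j l; case_tac j) auto
  then show "x \<in> (\<lambda>k. (Suc k, Suc (tau k))) ` {k. k < n \<and> barred (snd (w ! k)) \<and> k < tau k}"
    using bottom_st[of k] by (auto split: if_splits)
next
  fix x assume "x \<in> (\<lambda>k. (Suc k, Suc (tau k))) ` {k. k < n \<and> barred (snd (w ! k)) \<and> k < tau k}"
  then obtain k where "x = (Suc k, Suc (tau k))" "k < n" "barred (snd (w ! k))" "k < tau k" by auto
  then show "x \<in> {(j, l). j \<in> {1..n} \<and> l \<in> {1..n} \<and> j < l \<and> bottom (st w) j = B l \<and> bottom (st w) l = B j}"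
    using bottom_st[of k] bottom_st[of "tau k"] tau_props[of k] tau_tau[of k] beta_tau[of k] by auto
qed

end


theorem lemma5:
  assumes "colored_involution w"
  shows "in_Bn (length w) (bottom (st w))
       \<and> is_involution (length w) (bottom (st w))
       \<and> fixed_points (length w) (bottom (st w)) = (\<Sum>i\<in>vals w. acnt w i)
       \<and> barred_fixed_points (length w) (bottom (st w))
           = (\<Sum>i\<in>vals w. bcnt w i - 2 * (bcnt w i div 2))
       \<and> two_cycles (length w) (bottom (st w))
           = (\<Sum>(i, j)\<in>{(i, j). i \<in> vals w \<and> j \<in> vals w \<and> i < j}. ccnt w i j)
       \<and> barred_two_cycles (length w) (bottom (st w))
           = (\<Sum>(i, j)\<in>{(i, j). i \<in> vals w \<and> j \<in> vals w \<and> i < j}. dcnt w i j)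
             + (\<Sum>i\<in>vals w. bcnt w i div 2)"
proof -
  interpret cinv w using assms by unfold_locales
  let ?pi = "bottom (st w)"
  have absl_pi: "absl (?pi j) = Suc (tau (j - 1))" if "j \<in> {1..n}" for j
    using that bottom_st[of "j - 1"] by (cases j) auto
  have G1: "in_Bn n ?pi"
    unfolding in_Bn_def
  proof (rule bij_betw_byWitness[where f'="\<lambda>k. absl (?pi k)"])
    show "\<forall>a\<in>{1..n}. absl (?pi (absl (?pi a))) = a"
    proof
      fix a assume a: "a \<in> {1..n}"
      have a1: "a - 1 < n" using a by auto
      then have "Suc (tau (a - 1)) \<in> {1..n}" using tau_props[OF a1] by auto
      then show "absl (?pi (absl (?pi a))) = a"
        using absl_pi[OF a] absl_pi tau_tau[of "a - 1"] a by auto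
    qed
    then show "\<forall>a\<in>{1..n}. absl (?pi (absl (?pi a))) = a" .
    show "(\<lambda>k. absl (?pi k)) ` {1..n} \<subseteq> {1..n}"
    proof
      fix x assume "x \<in> (\<lambda>k. absl (?pi k)) ` {1..n}"
      then obtain a where a: "a \<in> {1..n}" "x = absl (?pi a)" by auto
      have a1: "a - 1 < n" using a by auto
      show "x \<in> {1..n}" using absl_pi[OF a(1)] a(2) tau_props[OF a1] by auto
    qed
    then show "(\<lambda>k. absl (?pi k)) ` {1..n} \<subseteq> {1..n}" .
  qed
  have G2: "is_involution n ?pi"
    unfolding is_involution_def
  proof
    fix j assume j: "j \<in> {1..n}"
    then obtain k where k: "j = Suc k" "k < n" by (cases j) auto
    show "?pi j = U j \<or> ?pi j = B j \<or>
      (\<exists>l\<in>{1..n}. l \<noteq> j \<and> (?pi j = U l \<and> ?pi l = U j \<or> ?pi j = B l \<and> ?pi l = B j))"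
    proof (cases "tau k = k")
      case True
      then show ?thesis using k bottom_st[of k] by auto
    next
      case False
      then show ?thesis
        using k bottom_st[of k] bottom_st[of "tau k"] tau_props[of k] tau_tau[of k] beta_tau[of k]
        by (intro disjI2 bexI[where x="Suc (tau k)"]) auto
    qed
  qed
  have fp1: "{k. k < n \<and> \<not> barred (snd (w ! k)) \<and> tau k = k}
      = {k. k < n \<and> (\<exists>i\<in>vals w. w ! k = (\<lambda>i. (U i, U i)) i \<and> True)}" (is "?L = ?R")
  proof (rule set_eqI)
    fix k show "k \<in> ?L \<longleftrightarrow> k \<in> ?R" using point[of k] by (cases "k < n") auto
  qed
  have G3: "fixed_points n ?pi = (\<Sum>i\<in>vals w. acnt w i)"
  proof -
    have "fixed_points n ?pi = card {k. k < n \<and> \<not> barred (snd (w ! k)) \<and> tau k = k}"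
      unfolding fixed_points_def fp_set by (simp add: card_image)
    also have "\<dots> = (\<Sum>i\<in>vals w. card {k. k < n \<and> w ! k = (\<lambda>i. (U i, U i)) i \<and> True})"
      unfolding fp1 by (rule card_family) (auto simp: finite_vals inj_on_def)
    also have "\<dots> = (\<Sum>i\<in>vals w. acnt w i)"
      by (rule sum.cong) (auto simp: acnt_def cnt_card[symmetric] cnt_def)
    finally show ?thesis .
  qed
  have bfp1: "{k. k < n \<and> barred (snd (w ! k)) \<and> tau k = k}
      = {k. k < n \<and> (\<exists>i\<in>vals w. w ! k = (\<lambda>i. (U i, B i)) i \<and> 2 * occ k + 1 = cnt (U i, B i))}" (is "?L = ?R")
  proof (rule set_eqI)
    fix k show "k \<in> ?L \<longleftrightarrow> k \<in> ?R" using point[of k] by (cases "k < n") auto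
  qed
  have G4: "barred_fixed_points n ?pi = (\<Sum>i\<in>vals w. bcnt w i - 2 * (bcnt w i div 2))"
  proof -
    have "barred_fixed_points n ?pi = card {k. k < n \<and> barred (snd (w ! k)) \<and> tau k = k}"
      unfolding barred_fixed_points_def bfp_set by (simp add: card_image)
    also have "\<dots> = (\<Sum>i\<in>vals w. card {k. k < n \<and> w ! k = (\<lambda>i. (U i, B i)) i \<and> 2 * occ k + 1 = cnt (U i, B i)})"
      unfolding bfp1 by (rule card_family) (auto simp: finite_vals inj_on_def)
    also have "\<dots> = (\<Sum>i\<in>vals w. bcnt w i - 2 * (bcnt w i div 2))"
    proof (rule sum.cong)
      fix i
      have "card {k. k < n \<and> w ! k = (U i, B i) \<and> (\<lambda>t. 2 * t + 1 = cnt (U i, B i)) (occ k)}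
          = card {t. t < cnt (U i, B i) \<and> (\<lambda>t. 2 * t + 1 = cnt (U i, B i)) t}"
        by (rule card_occ)
      then show "card {k. k < n \<and> w ! k = (\<lambda>i. (U i, B i)) i \<and> 2 * occ k + 1 = cnt (U i, B i)}
          = bcnt w i - 2 * (bcnt w i div 2)"
        using card_odd[of "cnt (U i, B i)"] by (simp add: bcnt_def cnt_def)
    qed simp
    finally show ?thesis .
  qed
  have injp: "inj_on (\<lambda>k. (Suc k, Suc (tau k))) X" for X by (rule inj_onI) simp
  have tc1: "{k. k < n \<and> \<not> barred (snd (w ! k)) \<and> k < tau k}
      = {k. k < n \<and> (\<exists>x\<in>P2. w ! k = (\<lambda>(i, j). (U i, U j)) x \<and> True)}" (is "?L = ?R")
  proof (rule set_eqI)
    fix k show "k \<in> ?L \<longleftrightarrow> k \<in> ?R" using point[of k] by (cases "k < n") auto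
  qed
  have G5: "two_cycles n ?pi = (\<Sum>(i, j)\<in>P2. ccnt w i j)"
  proof -
    have "two_cycles n ?pi = card {k. k < n \<and> \<not> barred (snd (w ! k)) \<and> k < tau k}"
      unfolding two_cycles_def tc_set by (simp add: card_image injp)
    also have "\<dots> = (\<Sum>x\<in>P2. card {k. k < n \<and> w ! k = (\<lambda>(i, j). (U i, U j)) x \<and> True})"
      unfolding tc1 by (rule card_family) (auto simp: finite_P2 inj_on_def)
    also have "\<dots> = (\<Sum>(i, j)\<in>P2. ccnt w i j)"
      by (rule sum.cong) (auto simp: ccnt_def cnt_card[symmetric] cnt_def)
    finally show ?thesis .
  qed
  let ?A = "{k. k < n \<and> (\<exists>x\<in>P2. w ! k = (\<lambda>(i, j). (U i, B j)) x \<and> True)}"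
  let ?B = "{k. k < n \<and> (\<exists>i\<in>vals w. w ! k = (\<lambda>i. (U i, B i)) i \<and> occ k < cnt (U i, B i) div 2)}"
  have btc1: "{k. k < n \<and> barred (snd (w ! k)) \<and> k < tau k} = ?A \<union> ?B" (is "?L = ?R")
  proof (rule set_eqI)
    fix k show "k \<in> ?L \<longleftrightarrow> k \<in> ?R" using point[of k] by (cases "k < n") auto
  qed
  have G6: "barred_two_cycles n ?pi = (\<Sum>(i, j)\<in>P2. dcnt w i j) + (\<Sum>i\<in>vals w. bcnt w i div 2)"
  proof -
    have "barred_two_cycles n ?pi = card {k. k < n \<and> barred (snd (w ! k)) \<and> k < tau k}"
      unfolding barred_two_cycles_def btc_set by (simp add: card_image injp)
    also have "\<dots> = card ?A + card ?B"
      unfolding btc1 by (rule card_Un_disjoint) auto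
    also have "card ?A = (\<Sum>x\<in>P2. card {k. k < n \<and> w ! k = (\<lambda>(i, j). (U i, B j)) x \<and> True})"
      by (rule card_family) (auto simp: finite_P2 inj_on_def)
    also have "\<dots> = (\<Sum>(i, j)\<in>P2. dcnt w i j)"
      by (rule sum.cong) (auto simp: dcnt_def cnt_card[symmetric] cnt_def)
    also have "card ?B = (\<Sum>i\<in>vals w. card {k. k < n \<and> w ! k = (\<lambda>i. (U i, B i)) i \<and> occ k < cnt (U i, B i) div 2})"
      by (rule card_family) (auto simp: finite_vals inj_on_def)
    also have "\<dots> = (\<Sum>i\<in>vals w. bcnt w i div 2)"
    proof (rule sum.cong)
      fix i
      have "card {k. k < n \<and> w ! k = (U i, B i) \<and> (\<lambda>t. t < cnt (U i, B i) div 2) (occ k)}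
          = card {t. t < cnt (U i, B i) \<and> (\<lambda>t. t < cnt (U i, B i) div 2) t}"
        by (rule card_occ)
      then show "card {k. k < n \<and> w ! k = (\<lambda>i. (U i, B i)) i \<and> occ k < cnt (U i, B i) div 2}
          = bcnt w i div 2"
        using card_half[of "cnt (U i, B i)"] by (simp add: bcnt_def cnt_def)
    qed simp
    finally show ?thesis .
  qed
  show ?thesis using G1 G2 G3 G4 G5 G6 by blast
qed

end
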